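(* Let $E^3$ and $O^3$ denote the sets of even-parity and odd-parity 3-bit strings and let $A\subseteq E^3$. For $n\ge1$, let Alice, Bob and Carol hold $X=(x_1,\dots,x_n)$, $Y=(y_1,\dots,y_n)$, $Z=(z_1,\dots,z_n)\in\{0,1\}^n$ under the promise that $x_iy_iz_i\in A\cup O^3$ for all $i$, and let $g_A(X,Y,Z)=\bigoplus_{i=1}^n t_A(x_iy_iz_i)$, where $t_A(w)=1$ if $w\in A$ and $0$ otherwise. Then $g_A$ can be computed by a distributed protocol using only local classical operations, no a priori quantum entanglement, and two classical bits of communication in total, at the end of which Alice knows the value of $g_A(X,Y,Z)$. *)

theory Defs
  imports Main
begin

type_synonym bits3 = "bool \<times> bool \<times> bool"

definition odd_parity :: "bits3 \<Rightarrow> bool" where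
  "odd_parity w = (case w of (a, b, c) \<Rightarrow> (a \<noteq> (b \<noteq> c)))"

definition E3 :: "bits3 set" where "E3 = {w. \<not> odd_parity w}"
definition O3 :: "bits3 set" where "O3 = {w. odd_parity w}"

definition tA :: "bits3 set \<Rightarrow> bits3 \<Rightarrow> bool" where
  "tA A w = (w \<in> A)"

definition gA :: "bits3 set \<Rightarrow> bool list \<Rightarrow> bool list \<Rightarrow> bool list \<Rightarrow> bool" where
  "gA A X Y Z = foldr (\<noteq>) (map (\<lambda>i. tA A (X ! i, Y ! i, Z ! i)) [0..<length X]) False"

text \<open>Deterministic classical communication protocols among parties 0 (Alice), 1 (Bob),
  2 (Carol). A protocol is a list of steps; each step is (sender, receiver, message function).
  The message function computes one bit from the sender's own input and the list of bits the
  sender has received so far (in order). Each step communicates exactly one classical bit,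
  so the total communication is the length of the list.\<close>
type_synonym step = "nat \<times> nat \<times> (bool list \<Rightarrow> bool list \<Rightarrow> bool)"

definition received :: "nat \<Rightarrow> (nat \<times> nat \<times> bool) list \<Rightarrow> bool list" where
  "received p tr = map (\<lambda>(s, r, b). b) (filter (\<lambda>(s, r, b). r = p) tr)"

fun exec :: "step list \<Rightarrow> (nat \<Rightarrow> bool list) \<Rightarrow> (nat \<times> nat \<times> bool) list \<Rightarrow> (nat \<times> nat \<times> bool) list" where
  "exec [] inp tr = tr"
| "exec ((s, r, f) # ps) inp tr = exec ps inp (tr @ [(s, r, f (inp s) (received s tr))])"

definition valid_protocol :: "step list \<Rightarrow> bool" where
  "valid_protocol ps = (\<forall>(s, r, f) \<in> set ps. s < 3 \<and> r < 3 \<and> s \<noteq> r)"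

definition alice_output ::
  "step list \<Rightarrow> (bool list \<Rightarrow> bool list \<Rightarrow> bool) \<Rightarrow> bool list \<Rightarrow> bool list \<Rightarrow> bool list \<Rightarrow> bool" where
  "alice_output ps out X Y Z =
     out X (received 0 (exec ps (\<lambda>p. if p = 0 then X else if p = 1 then Y else Z) []))"

end

theory Submission
  imports Defs
begin

definition par :: "bool list \<Rightarrow> bool" where "par xs = foldr (\<noteq>) xs False"

lemma par_Cons[simp]: "par (x # xs) = (x \<noteq> par xs)" by (simp add: par_def)
lemma par_Nil[simp]: "par [] = False" by (simp add: par_def)

lemma key:
  "length Y = length X \<Longrightarrow> length Z = length X \<Longrightarrow>
   foldr (\<noteq>) (map (\<lambda>i. \<not>(X!i \<noteq> (Y!i \<noteq> Z!i))) [0..<length X]) False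
   = (par X \<noteq> (par Y \<noteq> (par Z \<noteq> odd (length X))))"
proof (induction X arbitrary: Y Z)
  case Nil then show ?case by simp
next
  case (Cons x X)
  then obtain y Y' z Z' where "Y = y # Y'" "Z = z # Z'"
    by (metis length_Suc_conv)
  with Cons show ?case
    by (simp only: length_Cons map_upt_Suc nth_Cons_0 nth_Cons_Suc foldr_Cons o_apply, auto)
qed

theorem corollary3:
  fixes A :: "bits3 set" and n :: nat
  assumes "A \<subseteq> E3" and "n \<ge> 1"
  shows "\<exists>ps out. valid_protocol ps \<and> length ps = 2 \<and>
           (\<forall>X Y Z. length X = n \<and> length Y = n \<and> length Z = n \<and>
              (\<forall>i<n. (X ! i, Y ! i, Z ! i) \<in> A \<union> O3)
              \<longrightarrow> alice_output ps out X Y Z = gA A X Y Z)"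
proof (intro exI conjI allI impI)
  let ?ps = "[(1::nat, 0::nat, \<lambda>Y (_::bool list). par Y), (2, 0, \<lambda>Z (_::bool list). par Z)]"
  show "valid_protocol ?ps" by (simp add: valid_protocol_def)
  show "length ?ps = 2" by simp
  fix X Y Z
  assume h: "length X = n \<and> length Y = n \<and> length Z = n \<and>
              (\<forall>i<n. (X ! i, Y ! i, Z ! i) \<in> A \<union> O3)"
  have t: "tA A (X!i, Y!i, Z!i) = (\<not>(X!i \<noteq> (Y!i \<noteq> Z!i)))" if "i < n" for i
    using h that assms(1) unfolding tA_def E3_def O3_def odd_parity_def by auto
  have "gA A X Y Z = foldr (\<noteq>) (map (\<lambda>i. \<not>(X!i \<noteq> (Y!i \<noteq> Z!i))) [0..<length X]) False"
    unfolding gA_def using h t by (intro arg_cong[where f="\<lambda>l. foldr (\<noteq>) l False"] map_cong) auto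
  also have "\<dots> = (par X \<noteq> (par Y \<noteq> (par Z \<noteq> odd (length X))))"
    using h by (intro key) auto
  finally show "alice_output ?ps (\<lambda>X r. par X \<noteq> (r!0 \<noteq> (r!1 \<noteq> odd (length X)))) X Y Z = gA A X Y Z"
    by (simp add: alice_output_def received_def)
qed

end
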